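(* Let $X=X_1\times\dots\times X_n$ with $|X_i|=2$ for every $i\in N$, and let $\langle\mathcal A,\mathcal U\rangle$ be a twofold partition of $X$ satisfying the standing assumptions. Then the following are equivalent: (a) $\langle\mathcal A,\mathcal U\rangle$ has a representation in Model $F^{c}$; (b) it has a representation in Model $F$; (c) it has a representation in Model $E$.
   Context: Setting. $N=\{1,\dots,n\}$, $n\ge 2$; $X=X_1\times\dots\times X_n$ with each $X_i$ finite. $(y_i,x_{-i})$ denotes $x$ with $i$-th coordinate replaced by $y_i$. A twofold partition $\langle\mathcal A,\mathcal U\rangle$ of $X$: disjoint, union $X$. Standing assumptions: every attribute $i$ is influential (exist $x_i,y_i,a_{-i}$ with $(x_i,a_{-i})\in\mathcal A$, $(y_i,a_{-i})\in\mathcal U$), and $\succsim_i$ on $X_i$, defined by $x_i\succsim_i y_i$ iff [for all $a_{-i}$, $(y_i,a_{-i})\in\mathcal A\Rightarrow(x_i,a_{-i})\in\mathcal A$], is antisymmetric. Semiorders: a semiorder on $Y$ is a reflexive, Ferrers ($xSy, zSw\Rightarrow xSw$ or $zSy$) and semitransitive ($xSy, ySz\Rightarrow xSw$ or $wSz$) relation; its induced weak order is $x S^{wo} y$ iff for all $z$, [$ySz\Rightarrow xSz$] and [$zSx\Rightarrow zSy$]. Common data of Models $E$ and $F$: for each $i$ a semiorder $S_i$ on $X_i$ (asymmetric part $P_i$) and a semiorder $U_i$ whose asymmetric part $V_i\subseteq P_i$, with $S_i^{wo}\cap U_i^{wo}$ complete; an up-closed family $\mathcal F\subseteq 2^N$;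 the relation $xSy$ iff $\{i:x_iS_iy_i\}\in\mathcal F$ and $\{i:y_iV_ix_i\}=\varnothing$, with asymmetric part $P$; a set $\mathcal P\subseteq X$ with no $p,q\in\mathcal P$ satisfying $pPq$. Model $E$: for all $x$, $x\in\mathcal A$ iff [$xSp$ for some $p\in\mathcal P$ and not $qPx$ for all $q\in\mathcal P$]. Model $F$: for all $x$, $x\in\mathcal U$ iff [$pPx$ for some $p\in\mathcal P$ and not $xPq$ for all $q\in\mathcal P$]. $F^{c}$: $F$ with a representation in which all $V_i$ are empty. *)

theory Defs
  imports Main "HOL-Library.FuncSet"
begin

definition attrs :: "nat \<Rightarrow> nat set" where
  "attrs n = {1..n}"

definition alts :: "nat \<Rightarrow> (nat \<Rightarrow> 'a set) \<Rightarrow> (nat \<Rightarrow> 'a) set" where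
  "alts n X = PiE (attrs n) X"

definition twofold_partition :: "nat \<Rightarrow> (nat \<Rightarrow> 'a set) \<Rightarrow> (nat \<Rightarrow> 'a) set \<Rightarrow> (nat \<Rightarrow> 'a) set \<Rightarrow> bool" where
  "twofold_partition n X A U \<longleftrightarrow> A \<inter> U = {} \<and> A \<union> U = alts n X"

definition influential :: "nat \<Rightarrow> (nat \<Rightarrow> 'a set) \<Rightarrow> (nat \<Rightarrow> 'a) set \<Rightarrow> (nat \<Rightarrow> 'a) set \<Rightarrow> nat \<Rightarrow> bool" where
  "influential n X A U i \<longleftrightarrow>
     (\<exists>xi\<in>X i. \<exists>yi\<in>X i. \<exists>a\<in>alts n X. a(i := xi) \<in> A \<and> a(i := yi) \<in> U)"

definition trace_rel :: "nat \<Rightarrow> (nat \<Rightarrow> 'a set) \<Rightarrow> (nat \<Rightarrow> 'a) set \<Rightarrow> nat \<Rightarrow> 'a \<Rightarrow> 'a \<Rightarrow> bool" where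
  "trace_rel n X A i xi yi \<longleftrightarrow> (\<forall>a\<in>alts n X. a(i := yi) \<in> A \<longrightarrow> a(i := xi) \<in> A)"

definition standing_assumptions :: "nat \<Rightarrow> (nat \<Rightarrow> 'a set) \<Rightarrow> (nat \<Rightarrow> 'a) set \<Rightarrow> (nat \<Rightarrow> 'a) set \<Rightarrow> bool" where
  "standing_assumptions n X A U \<longleftrightarrow>
     (\<forall>i\<in>attrs n. influential n X A U i) \<and>
     (\<forall>i\<in>attrs n. \<forall>xi\<in>X i. \<forall>yi\<in>X i.
         trace_rel n X A i xi yi \<and> trace_rel n X A i yi xi \<longrightarrow> xi = yi)"

definition asym_part :: "('b \<Rightarrow> 'b \<Rightarrow> bool) \<Rightarrow> 'b \<Rightarrow> 'b \<Rightarrow> bool" where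
  "asym_part R x y \<longleftrightarrow> R x y \<and> \<not> R y x"

definition semiorder :: "'b set \<Rightarrow> ('b \<Rightarrow> 'b \<Rightarrow> bool) \<Rightarrow> bool" where
  "semiorder Y S \<longleftrightarrow>
     (\<forall>x\<in>Y. S x x) \<and>
     (\<forall>x\<in>Y. \<forall>y\<in>Y. \<forall>z\<in>Y. \<forall>w\<in>Y. S x y \<and> S z w \<longrightarrow> S x w \<or> S z y) \<and>
     (\<forall>x\<in>Y. \<forall>y\<in>Y. \<forall>z\<in>Y. \<forall>w\<in>Y. S x y \<and> S y z \<longrightarrow> S x w \<or> S w z)"

definition induced_wo :: "'b set \<Rightarrow> ('b \<Rightarrow> 'b \<Rightarrow> bool) \<Rightarrow> 'b \<Rightarrow> 'b \<Rightarrow> bool" where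
  "induced_wo Y S x y \<longleftrightarrow> (\<forall>z\<in>Y. (S y z \<longrightarrow> S x z) \<and> (S z x \<longrightarrow> S z y))"

definition glob_S :: "nat \<Rightarrow> (nat \<Rightarrow> 'a \<Rightarrow> 'a \<Rightarrow> bool) \<Rightarrow> (nat \<Rightarrow> 'a \<Rightarrow> 'a \<Rightarrow> bool)
     \<Rightarrow> nat set set \<Rightarrow> (nat \<Rightarrow> 'a) \<Rightarrow> (nat \<Rightarrow> 'a) \<Rightarrow> bool" where
  "glob_S n Si Ui F x y \<longleftrightarrow>
     {i\<in>attrs n. Si i (x i) (y i)} \<in> F \<and>
     {i\<in>attrs n. asym_part (Ui i) (y i) (x i)} = {}"

definition glob_P :: "nat \<Rightarrow> (nat \<Rightarrow> 'a \<Rightarrow> 'a \<Rightarrow> bool) \<Rightarrow> (nat \<Rightarrow> 'a \<Rightarrow> 'a \<Rightarrow> bool)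
     \<Rightarrow> nat set set \<Rightarrow> (nat \<Rightarrow> 'a) \<Rightarrow> (nat \<Rightarrow> 'a) \<Rightarrow> bool" where
  "glob_P n Si Ui F = asym_part (glob_S n Si Ui F)"

definition common_data :: "nat \<Rightarrow> (nat \<Rightarrow> 'a set) \<Rightarrow> (nat \<Rightarrow> 'a \<Rightarrow> 'a \<Rightarrow> bool) \<Rightarrow> (nat \<Rightarrow> 'a \<Rightarrow> 'a \<Rightarrow> bool)
     \<Rightarrow> nat set set \<Rightarrow> (nat \<Rightarrow> 'a) set \<Rightarrow> bool" where
  "common_data n X Si Ui F Pr \<longleftrightarrow>
     (\<forall>i\<in>attrs n.
        semiorder (X i) (Si i) \<and> semiorder (X i) (Ui i) \<and>
        (\<forall>a\<in>X i. \<forall>b\<in>X i. asym_part (Ui i) a b \<longrightarrow> asym_part (Si i) a b) \<and>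
        (\<forall>a\<in>X i. \<forall>b\<in>X i.
           (induced_wo (X i) (Si i) a b \<and> induced_wo (X i) (Ui i) a b) \<or>
           (induced_wo (X i) (Si i) b a \<and> induced_wo (X i) (Ui i) b a))) \<and>
     F \<subseteq> Pow (attrs n) \<and>
     (\<forall>B\<in>F. \<forall>C. B \<subseteq> C \<and> C \<subseteq> attrs n \<longrightarrow> C \<in> F) \<and>
     Pr \<subseteq> alts n X \<and>
     (\<forall>p\<in>Pr. \<forall>q\<in>Pr. \<not> glob_P n Si Ui F p q)"

definition model_E_rep :: "nat \<Rightarrow> (nat \<Rightarrow> 'a set) \<Rightarrow> (nat \<Rightarrow> 'a) set
     \<Rightarrow> (nat \<Rightarrow> 'a \<Rightarrow> 'a \<Rightarrow> bool) \<Rightarrow> (nat \<Rightarrow> 'a \<Rightarrow> 'a \<Rightarrow> bool)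
     \<Rightarrow> nat set set \<Rightarrow> (nat \<Rightarrow> 'a) set \<Rightarrow> bool" where
  "model_E_rep n X A Si Ui F Pr \<longleftrightarrow>
     common_data n X Si Ui F Pr \<and>
     (\<forall>x\<in>alts n X. x \<in> A \<longleftrightarrow>
        (\<exists>p\<in>Pr. glob_S n Si Ui F x p) \<and> (\<forall>q\<in>Pr. \<not> glob_P n Si Ui F q x))"

definition model_F_rep :: "nat \<Rightarrow> (nat \<Rightarrow> 'a set) \<Rightarrow> (nat \<Rightarrow> 'a) set
     \<Rightarrow> (nat \<Rightarrow> 'a \<Rightarrow> 'a \<Rightarrow> bool) \<Rightarrow> (nat \<Rightarrow> 'a \<Rightarrow> 'a \<Rightarrow> bool)
     \<Rightarrow> nat set set \<Rightarrow> (nat \<Rightarrow> 'a) set \<Rightarrow> bool" where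
  "model_F_rep n X U Si Ui F Pr \<longleftrightarrow>
     common_data n X Si Ui F Pr \<and>
     (\<forall>x\<in>alts n X. x \<in> U \<longleftrightarrow>
        (\<exists>p\<in>Pr. glob_P n Si Ui F p x) \<and> (\<forall>q\<in>Pr. \<not> glob_P n Si Ui F x q))"

definition has_model_E :: "nat \<Rightarrow> (nat \<Rightarrow> 'a set) \<Rightarrow> (nat \<Rightarrow> 'a) set \<Rightarrow> (nat \<Rightarrow> 'a) set \<Rightarrow> bool" where
  "has_model_E n X A U \<longleftrightarrow> (\<exists>Si Ui F Pr. model_E_rep n X A Si Ui F Pr)"

definition has_model_F :: "nat \<Rightarrow> (nat \<Rightarrow> 'a set) \<Rightarrow> (nat \<Rightarrow> 'a) set \<Rightarrow> (nat \<Rightarrow> 'a) set \<Rightarrow> bool" where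
  "has_model_F n X A U \<longleftrightarrow> (\<exists>Si Ui F Pr. model_F_rep n X U Si Ui F Pr)"

definition has_model_Fc :: "nat \<Rightarrow> (nat \<Rightarrow> 'a set) \<Rightarrow> (nat \<Rightarrow> 'a) set \<Rightarrow> (nat \<Rightarrow> 'a) set \<Rightarrow> bool" where
  "has_model_Fc n X A U \<longleftrightarrow>
     (\<exists>Si Ui F Pr. model_F_rep n X U Si Ui F Pr \<and>
        (\<forall>i\<in>attrs n. \<forall>a\<in>X i. \<forall>b\<in>X i. \<not> asym_part (Ui i) a b))"

end

theory Submission
  imports Defs
begin

lemma upd_alts:
  assumes "i \<in> attrs n" "v \<in> X i" "z \<in> alts n X"
  shows "z(i := v) \<in> alts n X"
  using PiE_fun_upd[of v X i z "attrs n"] assms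
  by (simp add: alts_def insert_absorb)

lemma alts_mem:
  assumes "z \<in> alts n X" "i \<in> attrs n"
  shows "z i \<in> X i"
  using assms by (auto simp: alts_def PiE_iff)

lemma alts_out:
  assumes "z \<in> alts n X" "i \<notin> attrs n"
  shows "z i = undefined"
  using assms by (auto simp: alts_def PiE_def extensional_def)

lemma upgrade:
  assumes cd: "common_data n X Si Ui F Pr" and i: "i \<in> attrs n"
    and a: "a \<in> X i" and b: "b \<in> X i"
    and woS: "induced_wo (X i) (Si i) a b" and woU: "induced_wo (X i) (Ui i) a b"
    and z: "z \<in> alts n X" and y: "y \<in> alts n X"
  shows "(glob_S n Si Ui F (z(i:=b)) y \<longrightarrow> glob_S n Si Ui F (z(i:=a)) y) \<and>
         (glob_S n Si Ui F y (z(i:=a)) \<longrightarrow> glob_S n Si Ui F y (z(i:=b)))"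
proof -
  have yi: "y i \<in> X i" using alts_mem[OF y i] .
  have up: "\<And>B C. B \<in> F \<Longrightarrow> B \<subseteq> C \<Longrightarrow> C \<subseteq> attrs n \<Longrightarrow> C \<in> F"
    using cd unfolding common_data_def by blast
  have s1: "Si i b (y i) \<longrightarrow> Si i a (y i)" and s2: "Si i (y i) a \<longrightarrow> Si i (y i) b"
    using woS yi unfolding induced_wo_def by auto
  have u1: "Ui i b (y i) \<longrightarrow> Ui i a (y i)" and u2: "Ui i (y i) a \<longrightarrow> Ui i (y i) b"
    using woU yi unfolding induced_wo_def by auto
  show ?thesis
  proof (intro conjI impI)
    assume g: "glob_S n Si Ui F (z(i:=b)) y"
    have "{j\<in>attrs n. Si j ((z(i:=b)) j) (y j)} \<subseteq> {j\<in>attrs n. Si j ((z(i:=a)) j) (y j)}"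
      using s1 by auto
    moreover have "{j\<in>attrs n. Si j ((z(i:=b)) j) (y j)} \<in> F" using g unfolding glob_S_def by blast
    ultimately have "{j\<in>attrs n. Si j ((z(i:=a)) j) (y j)} \<in> F" using up by blast
    moreover have "{j\<in>attrs n. asym_part (Ui j) (y j) ((z(i:=a)) j)} = {}"
      using g u1 u2 unfolding glob_S_def asym_part_def by (auto split: if_splits)
    ultimately show "glob_S n Si Ui F (z(i:=a)) y" unfolding glob_S_def by blast
  next
    assume g: "glob_S n Si Ui F y (z(i:=a))"
    have "{j\<in>attrs n. Si j (y j) ((z(i:=a)) j)} \<subseteq> {j\<in>attrs n. Si j (y j) ((z(i:=b)) j)}"
      using s2 by auto
    moreover have "{j\<in>attrs n. Si j (y j) ((z(i:=a)) j)} \<in> F" using g unfolding glob_S_def by blast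
    ultimately have "{j\<in>attrs n. Si j (y j) ((z(i:=b)) j)} \<in> F" using up by blast
    moreover have "{j\<in>attrs n. asym_part (Ui j) ((z(i:=b)) j) (y j)} = {}"
      using g u1 u2 unfolding glob_S_def asym_part_def by (auto split: if_splits)
    ultimately show "glob_S n Si Ui F y (z(i:=b))" unfolding glob_S_def by blast
  qed
qed

lemma upgradeP:
  assumes cd: "common_data n X Si Ui F Pr" and i: "i \<in> attrs n"
    and a: "a \<in> X i" and b: "b \<in> X i"
    and woS: "induced_wo (X i) (Si i) a b" and woU: "induced_wo (X i) (Ui i) a b"
    and z: "z \<in> alts n X" and y: "y \<in> alts n X"
  shows "(glob_P n Si Ui F (z(i:=b)) y \<longrightarrow> glob_P n Si Ui F (z(i:=a)) y) \<and>
         (glob_P n Si Ui F y (z(i:=a)) \<longrightarrow> glob_P n Si Ui F y (z(i:=b)))"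
  using upgrade[OF assms] unfolding glob_P_def asym_part_def by blast

definition compl_trace where
  "compl_trace n X A \<longleftrightarrow> (\<forall>i\<in>attrs n. \<forall>a\<in>X i. \<forall>b\<in>X i. trace_rel n X A i a b \<or> trace_rel n X A i b a)"

lemma F_trace:
  assumes tp: "twofold_partition n X A U" and rep: "model_F_rep n X U Si Ui F Pr"
    and i: "i \<in> attrs n" and a: "a \<in> X i" and b: "b \<in> X i"
    and woS: "induced_wo (X i) (Si i) a b" and woU: "induced_wo (X i) (Ui i) a b"
  shows "trace_rel n X A i a b"
  unfolding trace_rel_def
proof (intro ballI impI)
  fix z assume z: "z \<in> alts n X" and zb: "z(i := b) \<in> A"
  have cd: "common_data n X Si Ui F Pr" using rep unfolding model_F_rep_def by blast
  have Pr: "Pr \<subseteq> alts n X" using cd unfolding common_data_def by blast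
  have za: "z(i:=a) \<in> alts n X" and zb': "z(i:=b) \<in> alts n X"
    using upd_alts[OF i a z] upd_alts[OF i b z] .
  have "z(i:=b) \<notin> U" using zb tp unfolding twofold_partition_def by blast
  hence "\<not> ((\<exists>p\<in>Pr. glob_P n Si Ui F p (z(i:=b))) \<and> (\<forall>q\<in>Pr. \<not> glob_P n Si Ui F (z(i:=b)) q))"
    using rep zb' unfolding model_F_rep_def by blast
  hence "\<not> ((\<exists>p\<in>Pr. glob_P n Si Ui F p (z(i:=a))) \<and> (\<forall>q\<in>Pr. \<not> glob_P n Si Ui F (z(i:=a)) q))"
  proof -
    have h1: "\<forall>p\<in>Pr. glob_P n Si Ui F p (z(i:=a)) \<longrightarrow> glob_P n Si Ui F p (z(i:=b))"
      and h2: "\<forall>q\<in>Pr. glob_P n Si Ui F (z(i:=b)) q \<longrightarrow> glob_P n Si Ui F (z(i:=a)) q"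
      using upgradeP[OF cd i a b woS woU z] Pr by auto
    show ?thesis using h1 h2 \<open>\<not> ((\<exists>p\<in>Pr. glob_P n Si Ui F p (z(i:=b))) \<and> _)\<close> by metis
  qed
  hence "z(i:=a) \<notin> U" using rep za unfolding model_F_rep_def by blast
  thus "z(i:=a) \<in> A" using za tp unfolding twofold_partition_def by blast
qed

lemma E_trace:
  assumes rep: "model_E_rep n X A Si Ui F Pr"
    and i: "i \<in> attrs n" and a: "a \<in> X i" and b: "b \<in> X i"
    and woS: "induced_wo (X i) (Si i) a b" and woU: "induced_wo (X i) (Ui i) a b"
  shows "trace_rel n X A i a b"
  unfolding trace_rel_def
proof (intro ballI impI)
  fix z assume z: "z \<in> alts n X" and zb: "z(i := b) \<in> A"
  have cd: "common_data n X Si Ui F Pr" using rep unfolding model_E_rep_def by blast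
  have Pr: "Pr \<subseteq> alts n X" using cd unfolding common_data_def by blast
  have za: "z(i:=a) \<in> alts n X" and zb': "z(i:=b) \<in> alts n X"
    using upd_alts[OF i a z] upd_alts[OF i b z] .
  have "(\<exists>p\<in>Pr. glob_S n Si Ui F (z(i:=b)) p) \<and> (\<forall>q\<in>Pr. \<not> glob_P n Si Ui F q (z(i:=b)))"
    using rep zb zb' unfolding model_E_rep_def by blast
  hence "(\<exists>p\<in>Pr. glob_S n Si Ui F (z(i:=a)) p) \<and> (\<forall>q\<in>Pr. \<not> glob_P n Si Ui F q (z(i:=a)))"
  proof -
    have h1: "\<forall>p\<in>Pr. glob_P n Si Ui F p (z(i:=a)) \<longrightarrow> glob_P n Si Ui F p (z(i:=b))"
      and h2: "\<forall>q\<in>Pr. glob_S n Si Ui F (z(i:=b)) q \<longrightarrow> glob_S n Si Ui F (z(i:=a)) q"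
      using upgradeP[OF cd i a b woS woU z] upgrade[OF cd i a b woS woU z] Pr by auto
    show ?thesis using h1 h2 \<open>(\<exists>p\<in>Pr. glob_S n Si Ui F (z(i:=b)) p) \<and> _\<close> by metis
  qed
  thus "z(i:=a) \<in> A" using rep za unfolding model_E_rep_def by blast
qed

lemma F_compl:
  assumes tp: "twofold_partition n X A U" and rep: "model_F_rep n X U Si Ui F Pr"
  shows "compl_trace n X A"
  unfolding compl_trace_def
proof (intro ballI)
  fix i a b assume i: "i \<in> attrs n" and a: "a \<in> X i" and b: "b \<in> X i"
  have cd: "common_data n X Si Ui F Pr" using rep unfolding model_F_rep_def by blast
  then have "(induced_wo (X i) (Si i) a b \<and> induced_wo (X i) (Ui i) a b) \<or>
           (induced_wo (X i) (Si i) b a \<and> induced_wo (X i) (Ui i) b a)"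
  proof -
    have "\<forall>i\<in>attrs n. \<forall>a\<in>X i. \<forall>b\<in>X i.
           (induced_wo (X i) (Si i) a b \<and> induced_wo (X i) (Ui i) a b) \<or>
           (induced_wo (X i) (Si i) b a \<and> induced_wo (X i) (Ui i) b a)"
      using cd unfolding common_data_def by simp
    thus ?thesis using i a b by simp
  qed
  thus "trace_rel n X A i a b \<or> trace_rel n X A i b a"
    using F_trace[OF tp rep i a b] F_trace[OF tp rep i b a] by blast
qed

lemma E_compl:
  assumes rep: "model_E_rep n X A Si Ui F Pr"
  shows "compl_trace n X A"
  unfolding compl_trace_def
proof (intro ballI)
  fix i a b assume i: "i \<in> attrs n" and a: "a \<in> X i" and b: "b \<in> X i"
  have cd: "common_data n X Si Ui F Pr" using rep unfolding model_E_rep_def by blast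
  then have "(induced_wo (X i) (Si i) a b \<and> induced_wo (X i) (Ui i) a b) \<or>
           (induced_wo (X i) (Si i) b a \<and> induced_wo (X i) (Ui i) b a)"
  proof -
    have "\<forall>i\<in>attrs n. \<forall>a\<in>X i. \<forall>b\<in>X i.
           (induced_wo (X i) (Si i) a b \<and> induced_wo (X i) (Ui i) a b) \<or>
           (induced_wo (X i) (Si i) b a \<and> induced_wo (X i) (Ui i) b a)"
      using cd unfolding common_data_def by simp
    thus ?thesis using i a b by simp
  qed
  thus "trace_rel n X A i a b \<or> trace_rel n X A i b a"
    using E_trace[OF rep i a b] E_trace[OF rep i b a] by blast
qed

lemma trace_refl: "trace_rel n X A i a a"
  unfolding trace_rel_def by blast

lemma trace_trans: "trace_rel n X A i a b \<Longrightarrow> trace_rel n X A i b c \<Longrightarrow> trace_rel n X A i a c"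
  unfolding trace_rel_def by blast

lemma mono_A_ind:
  assumes fin: "finite D"
  shows "y \<in> A \<Longrightarrow> y \<in> alts n X \<Longrightarrow> x \<in> alts n X \<Longrightarrow>
    (\<forall>i\<in>attrs n. trace_rel n X A i (x i) (y i)) \<Longrightarrow> {i. x i \<noteq> y i} \<subseteq> D \<Longrightarrow> x \<in> A"
  using fin
proof (induction D arbitrary: y rule: finite_induct)
  case empty
  then have "x = y" by auto
  then show ?case using empty by simp
next
  case (insert j D)
  show ?case
  proof (cases "x j = y j")
    case True
    then have "{i. x i \<noteq> y i} \<subseteq> D" using insert.prems by auto
    then show ?thesis using insert by blast
  next
    case False
    have j: "j \<in> attrs n"
    proof (rule ccontr)
      assume "j \<notin> attrs n"
      then show False using False alts_out[OF insert.prems(2)] alts_out[OF insert.prems(3)] by simp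
    qed
    define y' where "y' = y(j := x j)"
    have y'alt: "y' \<in> alts n X" unfolding y'_def
      using upd_alts[OF j alts_mem[OF insert.prems(3) j] insert.prems(2)] .
    have "y(j := y j) \<in> A" using insert.prems(1) by simp
    then have y'A: "y' \<in> A" unfolding y'_def
      using insert.prems(4) j insert.prems(2) unfolding trace_rel_def by blast
    have tr: "\<forall>i\<in>attrs n. trace_rel n X A i (x i) (y' i)"
      using insert.prems(4) trace_refl unfolding y'_def by auto
    have "{i. x i \<noteq> y' i} \<subseteq> D" using insert.prems(5) unfolding y'_def by auto
    then show ?thesis using insert.IH[OF y'A y'alt insert.prems(3) tr] by blast
  qed
qed

lemma mono_A:
  assumes "y \<in> A" "y \<in> alts n X" "x \<in> alts n X"
    "\<forall>i\<in>attrs n. trace_rel n X A i (x i) (y i)"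
  shows "x \<in> A"
proof -
  have "{i. x i \<noteq> y i} \<subseteq> attrs n"
    using alts_out[OF assms(2)] alts_out[OF assms(3)] by force
  moreover have "finite (attrs n)" unfolding attrs_def by simp
  ultimately show ?thesis using mono_A_ind[of "attrs n" y A n X x] assms by blast
qed

lemma card2_eq:
  assumes "card S = 2" "x \<in> S" "y \<in> S" "t \<in> S" "x \<noteq> t" "y \<noteq> t"
  shows "x = y"
proof -
  obtain a b where "S = {a, b}" "a \<noteq> b" using assms(1) card_2_iff by metis
  then show ?thesis using assms by auto
qed

lemma construct:
  assumes card: "\<forall>i\<in>attrs n. card (X i) = 2"
    and tp: "twofold_partition n X A U"
    and ct: "compl_trace n X A"
    and Ane: "A \<noteq> {}"
  shows "has_model_Fc n X A U \<and> has_model_E n X A U"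
proof -
  let ?T = "trace_rel n X A"
  define top where "top = (\<lambda>i. if i \<in> attrs n then (SOME t. t \<in> X i \<and> (\<forall>b\<in>X i. ?T i t b)) else undefined)"
  have top: "top i \<in> X i \<and> (\<forall>b\<in>X i. ?T i (top i) b)" if i: "i \<in> attrs n" for i
  proof -
    have "card (X i) = 2" using card i by blast
    then obtain a b where ab: "X i = {a, b}" by (auto simp: card_2_iff)
    have "?T i a b \<or> ?T i b a" using ct i ab unfolding compl_trace_def by simp
    then have "\<exists>t. t \<in> X i \<and> (\<forall>b\<in>X i. ?T i t b)"
    proof
      assume "?T i a b" then have "a \<in> X i \<and> (\<forall>c\<in>X i. ?T i a c)" using ab trace_refl by simp
      then show ?thesis by blast
    next
      assume "?T i b a" then have "b \<in> X i \<and> (\<forall>c\<in>X i. ?T i b c)" using ab trace_refl by simp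
      then show ?thesis by blast
    qed
    then show ?thesis unfolding top_def using i someI_ex by simp
  qed
  have topalt: "top \<in> alts n X"
    unfolding alts_def PiE_def Pi_def extensional_def using top by (auto simp: top_def)
  have AX: "A \<subseteq> alts n X" using tp unfolding twofold_partition_def by blast
  define Si where "Si = (\<lambda>i. ?T i)"
  define Ui :: "nat \<Rightarrow> 'a \<Rightarrow> 'a \<Rightarrow> bool" where "Ui = (\<lambda>i a b. True)"
  define FF where "FF = {B. B \<subseteq> attrs n \<and> (\<exists>y\<in>A. {i\<in>attrs n. ?T i (y i) (top i)} \<subseteq> B)}"
  have gS: "glob_S n Si Ui FF x y \<longleftrightarrow> {i\<in>attrs n. ?T i (x i) (y i)} \<in> FF" for x y
    unfolding glob_S_def Si_def Ui_def asym_part_def by simp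
  have K1: "glob_S n Si Ui FF x top \<longleftrightarrow> x \<in> A" if x: "x \<in> alts n X" for x
  proof
    assume "glob_S n Si Ui FF x top"
    then have "{i\<in>attrs n. ?T i (x i) (top i)} \<in> FF" using gS by blast
    then obtain y where yA: "y \<in> A" and sub: "{i\<in>attrs n. ?T i (y i) (top i)} \<subseteq> {i\<in>attrs n. ?T i (x i) (top i)}"
      unfolding FF_def by blast
    have yalt: "y \<in> alts n X" using yA AX by blast
    have "\<forall>i\<in>attrs n. ?T i (x i) (y i)"
    proof
      fix i assume i: "i \<in> attrs n"
      have xi: "x i \<in> X i" and yi: "y i \<in> X i" using alts_mem x yalt i by blast+
      show "?T i (x i) (y i)"
      proof (cases "?T i (x i) (top i)")
        case True
        have "?T i (top i) (y i)" using top[OF i] yi by blast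
        then show ?thesis using trace_trans[OF True] by blast
      next
        case False
        then have "\<not> ?T i (y i) (top i)" using sub i by blast
        then have "x i \<noteq> top i" "y i \<noteq> top i" using False trace_refl by metis+
        then have "x i = y i" using card2_eq[of "X i" "x i" "y i" "top i"] card i xi yi top[OF i] by blast
        then show ?thesis using trace_refl by metis
      qed
    qed
    then show "x \<in> A" using mono_A[OF yA yalt x] by blast
  next
    assume "x \<in> A"
    then have "{i\<in>attrs n. ?T i (x i) (top i)} \<in> FF" unfolding FF_def by blast
    then show "glob_S n Si Ui FF x top" using gS by blast
  qed
  have K2: "glob_S n Si Ui FF top x" if x: "x \<in> alts n X" for x
  proof -
    have "{i\<in>attrs n. ?T i (top i) (x i)} = attrs n" using top alts_mem[OF x] by blast
    moreover have "attrs n \<in> FF" unfolding FF_def using Ane by blast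
    ultimately show ?thesis using gS by simp
  qed
  have PP: "glob_P n Si Ui FF p q \<longleftrightarrow> glob_S n Si Ui FF p q \<and> \<not> glob_S n Si Ui FF q p" for p q
    unfolding glob_P_def asym_part_def by simp
  have semi: "semiorder (X i) (?T i)" if i: "i \<in> attrs n" for i
  proof -
    have c: "\<forall>a\<in>X i. \<forall>b\<in>X i. ?T i a b \<or> ?T i b a" using ct i unfolding compl_trace_def by blast
    have f: "\<forall>x\<in>X i. \<forall>y\<in>X i. \<forall>z\<in>X i. \<forall>w\<in>X i. ?T i x y \<and> ?T i z w \<longrightarrow> ?T i x w \<or> ?T i z y"
    proof (intro ballI impI)
      fix x y z w assume xyzw: "x \<in> X i" "y \<in> X i" "z \<in> X i" "w \<in> X i" and h: "?T i x y \<and> ?T i z w"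
      show "?T i x w \<or> ?T i z y"
      proof (cases "?T i x w")
        case False
        then have "?T i w x" using c xyzw(1,4) by blast
        then have "?T i z y" using h trace_trans by metis
        then show ?thesis by blast
      qed simp
    qed
    have st: "\<forall>x\<in>X i. \<forall>y\<in>X i. \<forall>z\<in>X i. \<forall>w\<in>X i. ?T i x y \<and> ?T i y z \<longrightarrow> ?T i x w \<or> ?T i w z"
    proof (intro ballI impI)
      fix x y z w assume xyzw: "x \<in> X i" "y \<in> X i" "z \<in> X i" "w \<in> X i" and h: "?T i x y \<and> ?T i y z"
      show "?T i x w \<or> ?T i w z"
      proof (cases "?T i x w")
        case False
        then have "?T i w x" using c xyzw(1,4) by blast
        then have "?T i w z" using h trace_trans by metis
        then show ?thesis by blast
      qed simp
    qed
    have r: "\<forall>x\<in>X i. ?T i x x" unfolding trace_rel_def by blast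
    show ?thesis unfolding semiorder_def by (rule conjI[OF r conjI[OF f st]])
  qed
  have c1: "\<forall>i\<in>attrs n. semiorder (X i) (Si i) \<and> semiorder (X i) (Ui i) \<and>
        (\<forall>a\<in>X i. \<forall>b\<in>X i. asym_part (Ui i) a b \<longrightarrow> asym_part (Si i) a b) \<and>
        (\<forall>a\<in>X i. \<forall>b\<in>X i.
           (induced_wo (X i) (Si i) a b \<and> induced_wo (X i) (Ui i) a b) \<or>
           (induced_wo (X i) (Si i) b a \<and> induced_wo (X i) (Ui i) b a))"
  proof (rule ballI)
    fix i assume i: "i \<in> attrs n"
    have h1: "semiorder (X i) (Si i)" using semi[OF i] unfolding Si_def .
    have h2: "semiorder (X i) (Ui i)" unfolding semiorder_def Ui_def by simp
    have h3: "\<forall>a\<in>X i. \<forall>b\<in>X i. asym_part (Ui i) a b \<longrightarrow> asym_part (Si i) a b"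
      unfolding asym_part_def Ui_def by simp
    have c: "\<forall>a\<in>X i. \<forall>b\<in>X i. ?T i a b \<or> ?T i b a" using ct i unfolding compl_trace_def by blast
    have wo: "induced_wo (X i) (?T i) a b" if ab: "?T i a b" for a b
      unfolding induced_wo_def
    proof (intro ballI conjI impI)
      fix z assume "?T i b z" then show "?T i a z" using trace_trans[OF ab] by blast
    next
      fix z assume "?T i z a" then show "?T i z b" using trace_trans[OF _ ab] by blast
    qed
    have h4: "\<forall>a\<in>X i. \<forall>b\<in>X i. (induced_wo (X i) (Si i) a b \<and> induced_wo (X i) (Ui i) a b) \<or>
           (induced_wo (X i) (Si i) b a \<and> induced_wo (X i) (Ui i) b a)"
    proof (intro ballI)
      fix a b assume "a \<in> X i" "b \<in> X i"
      then have "?T i a b \<or> ?T i b a" using c by blast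
      then show "(induced_wo (X i) (Si i) a b \<and> induced_wo (X i) (Ui i) a b) \<or>
           (induced_wo (X i) (Si i) b a \<and> induced_wo (X i) (Ui i) b a)" (is "?L \<or> ?R")
      proof
        assume "?T i a b"
        then have "induced_wo (X i) (Si i) a b" using wo unfolding Si_def by blast
        moreover have "induced_wo (X i) (Ui i) a b" unfolding induced_wo_def Ui_def by simp
        ultimately show ?thesis by blast
      next
        assume "?T i b a"
        then have "induced_wo (X i) (Si i) b a" using wo unfolding Si_def by blast
        moreover have "induced_wo (X i) (Ui i) b a" unfolding induced_wo_def Ui_def by simp
        ultimately show ?thesis by blast
      qed
    qed
    show "semiorder (X i) (Si i) \<and> semiorder (X i) (Ui i) \<and>
        (\<forall>a\<in>X i. \<forall>b\<in>X i. asym_part (Ui i) a b \<longrightarrow> asym_part (Si i) a b) \<and>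
        (\<forall>a\<in>X i. \<forall>b\<in>X i.
           (induced_wo (X i) (Si i) a b \<and> induced_wo (X i) (Ui i) a b) \<or>
           (induced_wo (X i) (Si i) b a \<and> induced_wo (X i) (Ui i) b a))"
      by (rule conjI[OF h1 conjI[OF h2 conjI[OF h3 h4]]])
  qed
  have c2: "FF \<subseteq> Pow (attrs n)" unfolding FF_def by blast
  have c3: "\<forall>B\<in>FF. \<forall>C. B \<subseteq> C \<and> C \<subseteq> attrs n \<longrightarrow> C \<in> FF" unfolding FF_def by blast
  have c4: "{top} \<subseteq> alts n X" using topalt by simp
  have c5: "\<forall>p\<in>{top}. \<forall>q\<in>{top}. \<not> glob_P n Si Ui FF p q" unfolding PP by simp
  have cd: "common_data n X Si Ui FF {top}"
    unfolding common_data_def by (rule conjI[OF c1 conjI[OF c2 conjI[OF c3 conjI[OF c4 c5]]]])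
  have m1: "\<forall>x\<in>alts n X. x \<in> U \<longleftrightarrow> (\<exists>p\<in>{top}. glob_P n Si Ui FF p x) \<and> (\<forall>q\<in>{top}. \<not> glob_P n Si Ui FF x q)"
  proof
    fix x assume x: "x \<in> alts n X"
    have "x \<in> U \<longleftrightarrow> x \<notin> A" using tp x unfolding twofold_partition_def by blast
    then show "x \<in> U \<longleftrightarrow> (\<exists>p\<in>{top}. glob_P n Si Ui FF p x) \<and> (\<forall>q\<in>{top}. \<not> glob_P n Si Ui FF x q)"
      using K1[OF x] K2[OF x] unfolding PP by simp
  qed
  have m2: "\<forall>x\<in>alts n X. x \<in> A \<longleftrightarrow> (\<exists>p\<in>{top}. glob_S n Si Ui FF x p) \<and> (\<forall>q\<in>{top}. \<not> glob_P n Si Ui FF q x)"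
  proof
    fix x assume x: "x \<in> alts n X"
    show "x \<in> A \<longleftrightarrow> (\<exists>p\<in>{top}. glob_S n Si Ui FF x p) \<and> (\<forall>q\<in>{top}. \<not> glob_P n Si Ui FF q x)"
      using K1[OF x] K2[OF x] unfolding PP by simp
  qed
  have "model_F_rep n X U Si Ui FF {top}"
    unfolding model_F_rep_def by (rule conjI[OF cd m1])
  moreover have "model_E_rep n X A Si Ui FF {top}"
    unfolding model_E_rep_def by (rule conjI[OF cd m2])
  moreover have "\<forall>i\<in>attrs n. \<forall>a\<in>X i. \<forall>b\<in>X i. \<not> asym_part (Ui i) a b"
    unfolding Ui_def asym_part_def by simp
  ultimately show ?thesis unfolding has_model_Fc_def has_model_E_def by blast
qed

theorem proposition3:
  fixes n :: nat and X :: "nat \<Rightarrow> 'a set" and A U :: "(nat \<Rightarrow> 'a) set"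
  assumes "n \<ge> 2"
    and "\<forall>i\<in>attrs n. card (X i) = 2"
    and "twofold_partition n X A U"
    and "standing_assumptions n X A U"
  shows "(has_model_Fc n X A U \<longleftrightarrow> has_model_F n X A U) \<and>
         (has_model_F n X A U \<longleftrightarrow> has_model_E n X A U)"
proof -
  have "1 \<in> attrs n" using assms(1) unfolding attrs_def by simp
  then have "influential n X A U 1" using assms(4) unfolding standing_assumptions_def by blast
  then have Ane: "A \<noteq> {}" unfolding influential_def by blast
  have FcF: "has_model_Fc n X A U \<Longrightarrow> has_model_F n X A U"
    unfolding has_model_Fc_def has_model_F_def by blast
  have Fct: "has_model_F n X A U \<Longrightarrow> compl_trace n X A"
    unfolding has_model_F_def using F_compl[OF assms(3)] by blast
  have Ect: "has_model_E n X A U \<Longrightarrow> compl_trace n X A"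
    unfolding has_model_E_def using E_compl by blast
  show ?thesis using FcF Fct Ect construct[OF assms(2) assms(3) _ Ane] by blast
qed

end
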